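(* Let $\operatorname{Erf}$, $u_k\in\mathbb{Q}[x,y]$ and $v_k\in\mathbb{Q}[y]$ be as defined in the context. For $n,m\in\mathbb{N}_0$ define polynomials $p_{n,m}=p^u_{n,m}+p^v_{n,m}$ and $q_{n,m}=q^u_{n,m}+q^v_{n,m}$ in $\mathbb{Q}[x,y]$ as follows: expand $u_n(x,y)\,y^m=\sum_k \alpha_k(x)y^k$ and $v_n(y)\,y^m=\sum_k\beta_k y^k$ in powers of $y$, and set \[ p^u_{n,m}(x,y)=\sum_k\alpha_k(x)\,u_k(y,x),\qquad q^u_{n,m}(x,y)=-\sum_k\alpha_k(x)\,v_k(x), \] \[ p^v_{n,m}(x,y)=\sum_k\beta_k\frac{u_{k+1}(y,x)}{k+1},\qquad q^v_{n,m}(x,y)=\sum_k\beta_k\frac{y^{k+1}-v_{k+1}(x)}{k+1}. \] Then $p_{n,m}$ has degree $n+m$, $q_{n,m}$ has degree $n+m+1$, and \[ \iint x^ny^me^{-(x-y)^2}\,dx\,dy=p_{n,m}(x,y)e^{-(x-y)^2}+q_{n,m}(x,y)\operatorname{Erf}(x-y), \] in the sense that $\partial_x\partial_y$ of the right-hand side equals $x^ny^me^{-(x-y)^2}$.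
   Context: $\operatorname{Erf}(\xi)=\int_0^\xi e^{-x^2}\,dx$. The polynomials $u_k\in\mathbb{Q}[x,y]$ and $v_k\in\mathbb{Q}[y]$ are defined by $u_0=0$, $v_0=1$, $u_{k+1}(x,y)=y\,u_k(x,y)+\frac k2u_{k-1}(x,y)-\frac{x^k}{2}$, $v_{k+1}(y)=y\,v_k(y)+\frac k2v_{k-1}(y)$ (for $k=0$ the terms with index $-1$ are multiplied by $0$). The notation $u_k(y,x)$ means $u_k$ with its two arguments interchanged, and $v_k(x)$ means $v_k$ evaluated at $x$. *)

theory Defs
  imports "HOL-Analysis.Analysis" "HOL-Computational_Algebra.Polynomial"
begin

text \<open>Bivariate polynomials in Q[x,y] are represented as  rat poly poly :
  the outer variable is y, the coefficients are polynomials in x, i.e.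
  P = sum_j c_j(x) y^j, and the coefficient of x^i y^j is coeff (coeff P j) i.\<close>

type_synonym bipoly = "rat poly poly"

definition Erf :: "real \<Rightarrow> real" where
  "Erf \<xi> = (if 0 \<le> \<xi> then integral {0..\<xi>} (\<lambda>x. exp (- (x\<^sup>2)))
             else - integral {\<xi>..0} (\<lambda>x. exp (- (x\<^sup>2))))"

definition X_pow :: "nat \<Rightarrow> bipoly" where "X_pow k = [: monom 1 k :]"
definition Y_pow :: "nat \<Rightarrow> bipoly" where "Y_pow k = monom 1 k"

fun u :: "nat \<Rightarrow> bipoly" where
  "u 0 = 0"
| "u (Suc 0) = Y_pow 1 * u 0 - smult [:1/2:] (X_pow 0)"
| "u (Suc (Suc k)) = Y_pow 1 * u (Suc k) + smult [:of_nat (Suc k) / 2:] (u k)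
                      - smult [:1/2:] (X_pow (Suc k))"

fun v :: "nat \<Rightarrow> rat poly" where
  "v 0 = 1"
| "v (Suc 0) = [:0, 1:] * v 0"
| "v (Suc (Suc k)) = [:0, 1:] * v (Suc k) + smult (of_nat (Suc k) / 2) (v k)"

text \<open>Interchange of the two arguments: c x^i y^j becomes c x^j y^i.\<close>
definition swap2 :: "bipoly \<Rightarrow> bipoly" where
  "swap2 P = (\<Sum>j\<le>degree P. \<Sum>i\<le>degree (coeff P j). monom (monom (coeff (coeff P j) i) j) i)"

definition at_x :: "rat poly \<Rightarrow> bipoly" where "at_x q = [: q :]"

definition pu :: "nat \<Rightarrow> nat \<Rightarrow> bipoly" where
  "pu n m = (let A = u n * Y_pow m in
     \<Sum>k\<le>degree A. [: coeff A k :] * swap2 (u k))"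

definition qu :: "nat \<Rightarrow> nat \<Rightarrow> bipoly" where
  "qu n m = (let A = u n * Y_pow m in
     - (\<Sum>k\<le>degree A. [: coeff A k :] * at_x (v k)))"

definition pv :: "nat \<Rightarrow> nat \<Rightarrow> bipoly" where
  "pv n m = (let B = v n * [:0,1:] ^ m in
     \<Sum>k\<le>degree B. smult [: coeff B k / of_nat (k+1) :] (swap2 (u (k+1))))"

definition qv :: "nat \<Rightarrow> nat \<Rightarrow> bipoly" where
  "qv n m = (let B = v n * [:0,1:] ^ m in
     \<Sum>k\<le>degree B. smult [: coeff B k / of_nat (k+1) :] (Y_pow (k+1) - at_x (v (k+1))))"

definition pnm :: "nat \<Rightarrow> nat \<Rightarrow> bipoly" where "pnm n m = pu n m + pv n m"
definition qnm :: "nat \<Rightarrow> nat \<Rightarrow> bipoly" where "qnm n m = qu n m + qv n m"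

text \<open>Total degree (of a nonzero bivariate polynomial).\<close>
definition total_degree :: "bipoly \<Rightarrow> nat" where
  "total_degree P = Max {i + j | i j. coeff (coeff P j) i \<noteq> 0}"

definition eval2 :: "bipoly \<Rightarrow> real \<Rightarrow> real \<Rightarrow> real" where
  "eval2 P x y = poly (map_poly (\<lambda>c. poly (map_poly of_rat c) x) P) y"

end

theory Submission
  imports Defs
begin

lemma hom_sum:
  fixes f :: "'a::comm_monoid_add \<Rightarrow> 'b::comm_monoid_add"
  assumes "f 0 = 0" "\<And>a b. f (a+b) = f a + f b"
  shows "f (sum g S) = (\<Sum>i\<in>S. f (g i))"
  by (induction S rule: infinite_finite_induct) (auto simp: assms)

lemma mp_add:
  assumes "f 0 = 0" "\<And>a b. f (a+b) = f a + f b"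
  shows "map_poly f (p+q) = map_poly f p + map_poly f q"
  by (intro poly_eqI) (simp add: coeff_map_poly assms)

lemma mp_mult:
  fixes f :: "'a::comm_semiring_0 \<Rightarrow> 'b::comm_semiring_0"
  assumes "f 0 = 0" "\<And>a b. f (a+b) = f a + f b" "\<And>a b. f (a*b) = f a * f b"
  shows "map_poly f (p*q) = map_poly f p * map_poly f q"
  by (intro poly_eqI) (simp add: coeff_map_poly coeff_mult hom_sum[of f, OF assms(1,2)] assms)

definition hx :: "real \<Rightarrow> rat poly \<Rightarrow> real" where
  "hx x c = poly (map_poly of_rat c) x"

lemma mpr_add: "map_poly (of_rat::rat\<Rightarrow>real) (p+q) = map_poly of_rat p + map_poly of_rat q"
  by (rule mp_add) (auto simp: of_rat_add)
lemma mpr_mult: "map_poly (of_rat::rat\<Rightarrow>real) (p*q) = map_poly of_rat p * map_poly of_rat q"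
  by (rule mp_mult) (auto simp: of_rat_add of_rat_mult)

lemma hx0: "hx x 0 = 0" by (simp add: hx_def)
lemma hx_add: "hx x (a+b) = hx x a + hx x b" by (simp add: hx_def mpr_add)
lemma hx_mult: "hx x (a*b) = hx x a * hx x b" by (simp add: hx_def mpr_mult)

lemma eval2_hx: "eval2 P x y = poly (map_poly (hx x) P) y"
  by (simp add: eval2_def hx_def[abs_def])

lemma eval2_add: "eval2 (P+Q) x y = eval2 P x y + eval2 Q x y"
  unfolding eval2_hx by (subst mp_add) (auto simp: hx0 hx_add)
lemma eval2_mult: "eval2 (P*Q) x y = eval2 P x y * eval2 Q x y"
  unfolding eval2_hx by (subst mp_mult) (auto simp: hx0 hx_add hx_mult)
lemma eval2_0[simp]: "eval2 0 x y = 0" by (simp add: eval2_def)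
lemma eval2_minus: "eval2 (-P) x y = - eval2 P x y"
  using eval2_add[of P "-P" x y] by simp
lemma eval2_diff: "eval2 (P-Q) x y = eval2 P x y - eval2 Q x y"
  using eval2_add[of "P-Q" Q x y] by simp
lemma eval2_sum: "eval2 (sum g S) x y = (\<Sum>i\<in>S. eval2 (g i) x y)"
  by (induction S rule: infinite_finite_induct) (auto simp: eval2_add)
lemma eval2_const: "eval2 [:c:] x y = poly (map_poly of_rat c) x"
  by (simp add: eval2_hx hx_def map_poly_pCons)
lemma eval2_smult: "eval2 (smult c P) x y = poly (map_poly of_rat c) x * eval2 P x y"
proof -
  have "smult c P = [:c:] * P" by simp
  then show ?thesis by (simp only: eval2_mult eval2_const)
qed
lemma eval2_Y: "eval2 (Y_pow k) x y = y ^ k"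
  by (simp add: eval2_hx Y_pow_def map_poly_monom hx_def poly_monom)
lemma eval2_X: "eval2 (X_pow k) x y = x ^ k"
  by (simp add: eval2_const X_pow_def map_poly_monom poly_monom)
lemma eval2_at_x: "eval2 (at_x q) x y = poly (map_poly of_rat q) x"
  by (simp add: eval2_const at_x_def)
lemma eval2_monom2: "eval2 (monom (monom c j) i) x y = of_rat c * x ^ j * y ^ i"
  by (simp add: eval2_hx map_poly_monom hx_def poly_monom hx0)

lemma poly_sum_le: fixes x :: "'a::comm_semiring_1" assumes "degree p \<le> N" shows "poly p x = (\<Sum>i\<le>N. coeff p i * x^i)"
  unfolding poly_altdef
  by (rule sum.mono_neutral_left) (use assms in \<open>auto simp: coeff_eq_0\<close>)

lemma hx_expand: "hx x c = (\<Sum>i\<le>degree c. of_rat (coeff c i) * x ^ i)"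
  unfolding hx_def
  by (subst poly_sum_le[of _ "degree c"]) (auto simp: coeff_map_poly degree_map_poly)

lemma eval2_expand: "eval2 P x y = (\<Sum>j\<le>degree P. \<Sum>i\<le>degree (coeff P j). of_rat (coeff (coeff P j) i) * x ^ i * y ^ j)"
proof -
  have "eval2 P x y = (\<Sum>j\<le>degree P. hx x (coeff P j) * y ^ j)"
    unfolding eval2_hx
    by (subst poly_sum_le[of _ "degree P"]) (auto simp: coeff_map_poly hx0 map_poly_degree_leq)
  also have "\<dots> = (\<Sum>j\<le>degree P. \<Sum>i\<le>degree (coeff P j). of_rat (coeff (coeff P j) i) * x ^ i * y ^ j)"
    by (simp add: hx_expand sum_distrib_right)
  finally show ?thesis .
qed

lemma eval2_swap2: "eval2 (swap2 P) x y = eval2 P y x"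
  unfolding swap2_def eval2_sum eval2_monom2 eval2_expand[of P y x]
  by (simp add: mult_ac)


lemma coeff_swap2: "coeff (coeff (swap2 P) b) a = coeff (coeff P a) b"
proof -
  have "coeff (coeff (swap2 P) b) a = (\<Sum>j\<le>degree P. if a = j then (\<Sum>i\<le>degree (coeff P j).
          (if b = i then coeff (coeff P j) i else 0)) else 0)"
  proof -
    have m: "coeff (coeff (monom (monom c j) i) b) a = (if a = j then (if b = i then c else 0) else 0)" for c j i
      by (simp add: coeff_monom)
    show ?thesis unfolding swap2_def by (simp only: coeff_sum m) (intro sum.cong refl, auto)
  qed
  also have "\<dots> = (if a \<le> degree P then (\<Sum>i\<le>degree (coeff P a).
          (if b = i then coeff (coeff P a) i else 0)) else 0)"
    by (subst sum.delta') auto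
  also have "\<dots> = (if a \<le> degree P then (if b \<le> degree (coeff P a) then coeff (coeff P a) b else 0) else 0)"
    by (subst sum.delta') auto
  also have "\<dots> = coeff (coeff P a) b"
    by (auto simp: coeff_eq_0)
  finally show ?thesis .
qed


lemma eval2_coeffs: "eval2 P x y = (\<Sum>j\<le>degree P. poly (map_poly of_rat (coeff P j)) x * y ^ j)"
  unfolding eval2_hx
  by (subst poly_sum_le[of _ "degree P"]) (auto simp: coeff_map_poly hx0 map_poly_degree_leq hx_def)

definition uf :: "nat \<Rightarrow> real \<Rightarrow> real \<Rightarrow> real" where "uf k x y = eval2 (u k) x y"
definition vf :: "nat \<Rightarrow> real \<Rightarrow> real" where "vf k t = poly (map_poly of_rat (v k)) t"

lemma uf_0: "uf 0 x y = 0" by (simp add: uf_def)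
lemma uf_1: "uf (Suc 0) x y = -1/2"
  by (simp add: uf_def eval2_diff eval2_smult eval2_X eval2_mult map_poly_pCons of_rat_divide of_rat_add eval2_minus)
lemma uf_SS: "uf (Suc (Suc k)) x y = y * uf (Suc k) x y + (real k + 1) / 2 * uf k x y - x ^ (Suc k) / 2"
  by (simp add: uf_def eval2_diff eval2_add eval2_smult eval2_X eval2_Y eval2_mult map_poly_pCons of_rat_divide of_rat_add eval2_minus)
lemma vf_0: "vf 0 t = 1" by (simp add: vf_def)
lemma vf_1: "vf (Suc 0) t = t" by (simp add: vf_def mpr_mult map_poly_pCons)
lemma vf_SS: "vf (Suc (Suc k)) t = t * vf (Suc k) t + (real k + 1) / 2 * vf k t"
  by (simp add: vf_def mpr_add mpr_mult map_poly_pCons map_poly_smult of_rat_mult of_rat_divide of_rat_add)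

lemma uf_deriv_aux:
  "((\<lambda>a. uf k a b) has_real_derivative (a ^ k - 2 * (b - a) * uf k a b - vf k b)) (at a) \<and>
   ((\<lambda>a. uf (Suc k) a b) has_real_derivative (a ^ Suc k - 2 * (b - a) * uf (Suc k) a b - vf (Suc k) b)) (at a)"
proof (induction k arbitrary: a)
  case 0
  show ?case by (auto simp: uf_0 uf_1 vf_0 vf_1 field_simps intro!: derivative_eq_intros)
next
  case (Suc k)
  have IH0: "((\<lambda>a. uf k a b) has_real_derivative (a ^ k - 2 * (b - a) * uf k a b - vf k b)) (at a)"
    and IH1: "((\<lambda>a. uf (Suc k) a b) has_real_derivative (a ^ Suc k - 2 * (b - a) * uf (Suc k) a b - vf (Suc k) b)) (at a)"
    using Suc.IH[of a] by auto
  have fe: "(\<lambda>a. uf (Suc (Suc k)) a b) = (\<lambda>a. b * uf (Suc k) a b + (real k + 1) / 2 * uf k a b - a ^ (Suc k) / 2)"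
    by (simp add: uf_SS)
  have "((\<lambda>a. b * uf (Suc k) a b + (real k + 1) / 2 * uf k a b - a ^ (Suc k) / 2) has_real_derivative
     b * (a ^ Suc k - 2 * (b - a) * uf (Suc k) a b - vf (Suc k) b)
     + (real k + 1) / 2 * (a ^ k - 2 * (b - a) * uf k a b - vf k b) - (real k + 1) * a ^ k / 2) (at a)"
  proof -
    have d3: "((\<lambda>a. a ^ Suc k / 2) has_real_derivative (real k + 1) * a ^ k / 2) (at a)"
      using DERIV_cdivide[OF DERIV_pow[of "Suc k" a], of 2] by (simp add: algebra_simps)
    show ?thesis using DERIV_diff[OF DERIV_add[OF DERIV_cmult[OF IH1, of b] DERIV_cmult[OF IH0, of "(real k + 1) / 2"]] d3]
      by simp
  qed
  then have "((\<lambda>a. uf (Suc (Suc k)) a b) has_real_derivative (a ^ Suc (Suc k) - 2 * (b - a) * uf (Suc (Suc k)) a b - vf (Suc (Suc k)) b)) (at a)"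
    unfolding fe by (rule DERIV_cong) (simp add: uf_SS vf_SS field_simps)
  then show ?case using IH1 by simp
qed

lemma uf_deriv: "((\<lambda>a. uf k a b) has_real_derivative (a ^ k - 2 * (b - a) * uf k a b - vf k b)) (at a)"
  using uf_deriv_aux by blast

lemma Erf_deriv: "(Erf has_real_derivative exp (-(t^2))) (at t)"
proof -
  define f where "f = (\<lambda>x::real. exp (-(x^2)))"
  define a where "a = -\<bar>t\<bar> - 1"
  define b where "b = \<bar>t\<bar> + 1"
  have cont: "continuous_on {c..d} f" for c d unfolding f_def by (intro continuous_intros)
  have int: "f integrable_on {c..d}" for c d by (rule integrable_continuous_interval[OF cont])
  have a0: "a \<le> 0" by (simp add: a_def)
  have eq: "integral {a..\<xi>} f - integral {a..0} f = Erf \<xi>" if "\<xi> \<in> {a<..<b}" for \<xi>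
  proof -
    from that have "a \<le> \<xi>" by auto
    show ?thesis
    proof (cases "0 \<le> \<xi>")
      case True
      have "integral {a..0} f + integral {0..\<xi>} f = integral {a..\<xi>} f"
        by (rule Henstock_Kurzweil_Integration.integral_combine) (use True a0 int in auto)
      thus ?thesis using True by (simp add: Erf_def f_def)
    next
      case False
      have "integral {a..\<xi>} f + integral {\<xi>..0} f = integral {a..0} f"
        by (rule Henstock_Kurzweil_Integration.integral_combine) (use False \<open>a \<le> \<xi>\<close> int in auto)
      thus ?thesis using False by (simp add: Erf_def f_def)
    qed
  qed
  have tin: "t \<in> {a<..<b}" by (auto simp: a_def b_def)
  have d1: "((\<lambda>x. integral {a..x} f) has_real_derivative f t) (at t within {a..b})"
    by (rule integral_has_real_derivative[OF cont]) (use tin in auto)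
  have "((\<lambda>x. integral {a..x} f) has_real_derivative f t) (at t within {a<..<b})"
    by (rule DERIV_subset[OF d1]) auto
  then have "((\<lambda>x. integral {a..x} f) has_real_derivative f t) (at t)"
    using at_within_open[OF tin open_greaterThanLessThan] by simp
  then have "((\<lambda>x. integral {a..x} f - integral {a..0} f) has_real_derivative f t) (at t)"
    using DERIV_diff[OF _ DERIV_const] by fastforce
  then have "(Erf has_real_derivative f t) (at t)"
    by (rule has_field_derivative_transform_within_open[where S="{a<..<b}"]) (use tin eq in auto)
  then show ?thesis by (simp add: f_def)
qed

lemma Erf_deriv_chain[derivative_intros]:
  "(g has_real_derivative g') (at x within s) \<Longrightarrow>
   ((\<lambda>x. Erf (g x)) has_real_derivative exp (-((g x)^2)) * g') (at x within s)"
  using DERIV_chain2[OF Erf_deriv] by blast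


lemma uf_deriv_chain[derivative_intros]:
  "(g has_real_derivative g') (at t within s) \<Longrightarrow>
   ((\<lambda>t. uf k (g t) b) has_real_derivative (g t ^ k - 2 * (b - g t) * uf k (g t) b - vf k b) * g') (at t within s)"
  using DERIV_chain2[OF uf_deriv] by blast

lemma K_deriv:
  "((\<lambda>y. uf k y x * exp (- ((x - y)^2)) - vf k x * Erf (x - y)) has_real_derivative
     y ^ k * exp (- ((x - y)^2))) (at y)"
  by (auto intro!: derivative_eq_intros simp: algebra_simps power2_eq_square)

lemma pow_pred: "0 < n \<Longrightarrow> (y::real) * y ^ (n - Suc 0) = y ^ n"
  by (cases n) auto

lemma M_deriv:
  "((\<lambda>y. uf (Suc k) y x * exp (- ((x - y)^2)) + (y ^ Suc k - vf (Suc k) x) * Erf (x - y)) has_real_derivative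
     (real k + 1) * y ^ k * Erf (x - y)) (at y)"
  by (auto intro!: derivative_eq_intros simp: algebra_simps power2_eq_square pow_pred)

lemma G_deriv:
  "((\<lambda>x. y ^ m * (uf n x y * exp (- ((x - y)^2)) + vf n y * Erf (x - y))) has_real_derivative
     x ^ n * y ^ m * exp (- ((x - y)^2))) (at x)"
  by (auto intro!: derivative_eq_intros simp: algebra_simps power2_eq_square)


lemma ev_pu: "eval2 (pu n m) x y = (\<Sum>k\<le>degree (u n * Y_pow m). poly (map_poly of_rat (coeff (u n * Y_pow m) k)) x * uf k y x)"
  by (simp add: pu_def Let_def eval2_sum eval2_mult eval2_const eval2_swap2 uf_def eval2_smult)
lemma ev_qu: "eval2 (qu n m) x y = - (\<Sum>k\<le>degree (u n * Y_pow m). poly (map_poly of_rat (coeff (u n * Y_pow m) k)) x * vf k x)"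
  by (simp add: qu_def Let_def eval2_minus eval2_sum eval2_mult eval2_const eval2_at_x vf_def eval2_smult)
lemma ev_pv: "eval2 (pv n m) x y = (\<Sum>k\<le>degree (v n * [:0,1:]^m). of_rat (coeff (v n * [:0,1:]^m) k) / (1 + real k) * uf (Suc k) y x)"
  by (simp add: pv_def Let_def eval2_sum eval2_smult eval2_swap2 uf_def map_poly_pCons of_rat_divide of_rat_add)
lemma ev_qv: "eval2 (qv n m) x y = (\<Sum>k\<le>degree (v n * [:0,1:]^m). of_rat (coeff (v n * [:0,1:]^m) k) / (1 + real k) * (y ^ Suc k - vf (Suc k) x))"
  by (simp add: qv_def Let_def eval2_sum eval2_smult eval2_diff eval2_Y eval2_at_x vf_def map_poly_pCons of_rat_divide of_rat_add)

lemma mpr_X_pow: "map_poly (of_rat::rat\<Rightarrow>real) ([:0,1:]^m) = [:0,1:]^m"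
  by (induction m) (simp_all add: mpr_mult map_poly_pCons)

lemma sumA: "(\<Sum>k\<le>degree (u n * Y_pow m). poly (map_poly of_rat (coeff (u n * Y_pow m) k)) x * y ^ k) = uf n x y * y ^ m"
  using eval2_coeffs[of "u n * Y_pow m" x y] by (simp add: eval2_mult eval2_Y uf_def)

lemma sumB: "(\<Sum>k\<le>degree (v n * [:0,1:]^m). of_rat (coeff (v n * [:0,1:]^m) k) * y ^ k) = vf n y * y ^ m"
proof -
  have "(\<Sum>k\<le>degree (v n * [:0,1:]^m). of_rat (coeff (v n * [:0,1:]^m) k) * y ^ k) = poly (map_poly of_rat (v n * [:0,1:]^m)) y"
    by (subst poly_sum_le[of _ "degree (v n * [:0,1:]^m)"]) (auto simp: coeff_map_poly map_poly_degree_leq)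
  also have "\<dots> = vf n y * y ^ m" by (simp add: mpr_mult mpr_X_pow vf_def)
  finally show ?thesis .
qed

lemma analytic:
  "\<exists>G. (\<forall>x y. ((\<lambda>y'. eval2 (pnm n m) x y' * exp (- ((x - y')\<^sup>2)) + eval2 (qnm n m) x y' * Erf (x - y'))
            has_real_derivative G x y) (at y))
     \<and> (\<forall>x y. ((\<lambda>x'. G x' y) has_real_derivative x ^ n * y ^ m * exp (- ((x - y)\<^sup>2))) (at x))"
proof (intro exI conjI allI)
  define A where "A = u n * Y_pow m"
  define B where "B = v n * [:0,1:]^m"
  define a where "a = (\<lambda>k (x::real). poly (map_poly of_rat (coeff A k)) x)"
  define c where "c = (\<lambda>k. (of_rat (coeff B k) :: real) / (1 + real k))"
  fix x y :: real
  let ?E = "\<lambda>y. exp (- ((x - y)\<^sup>2))"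
  let ?R = "\<lambda>y. Erf (x - y)"
  have Fe: "(\<lambda>y'. eval2 (pnm n m) x y' * ?E y' + eval2 (qnm n m) x y' * ?R y') =
     (\<lambda>y'. (\<Sum>k\<le>degree A. a k x * (uf k y' x * ?E y' - vf k x * ?R y'))
         + (\<Sum>k\<le>degree B. c k * (uf (Suc k) y' x * ?E y' + (y' ^ Suc k - vf (Suc k) x) * ?R y')))"
  proof
    fix y'
    have "eval2 (pnm n m) x y' * ?E y' + eval2 (qnm n m) x y' * ?R y'
       = (eval2 (pu n m) x y' * ?E y' + eval2 (qu n m) x y' * ?R y') + (eval2 (pv n m) x y' * ?E y' + eval2 (qv n m) x y' * ?R y')"
      by (simp add: pnm_def qnm_def eval2_add algebra_simps)
    also have "eval2 (pu n m) x y' * ?E y' + eval2 (qu n m) x y' * ?R y' = (\<Sum>k\<le>degree A. a k x * (uf k y' x * ?E y' - vf k x * ?R y'))"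
      by (simp add: ev_pu ev_qu A_def a_def sum_distrib_right sum_distrib_left right_diff_distrib sum_subtractf mult_ac)
    also have "eval2 (pv n m) x y' * ?E y' + eval2 (qv n m) x y' * ?R y' = (\<Sum>k\<le>degree B. c k * (uf (Suc k) y' x * ?E y' + (y' ^ Suc k - vf (Suc k) x) * ?R y'))"
      by (simp add: ev_pv ev_qv B_def c_def sum_distrib_right sum_distrib_left distrib_left sum.distrib mult_ac)
    finally show "eval2 (pnm n m) x y' * ?E y' + eval2 (qnm n m) x y' * ?R y' = (\<Sum>k\<le>degree A. a k x * (uf k y' x * ?E y' - vf k x * ?R y'))
         + (\<Sum>k\<le>degree B. c k * (uf (Suc k) y' x * ?E y' + (y' ^ Suc k - vf (Suc k) x) * ?R y'))" .
  qed
  have d1: "((\<lambda>y'. \<Sum>k\<le>degree A. a k x * (uf k y' x * ?E y' - vf k x * ?R y')) has_real_derivative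
      (\<Sum>k\<le>degree A. a k x * (y ^ k * ?E y))) (at y)"
    by (rule DERIV_sum, rule DERIV_cmult, rule K_deriv)
  have d2: "((\<lambda>y'. \<Sum>k\<le>degree B. c k * (uf (Suc k) y' x * ?E y' + (y' ^ Suc k - vf (Suc k) x) * ?R y')) has_real_derivative
      (\<Sum>k\<le>degree B. c k * ((real k + 1) * y ^ k * ?R y))) (at y)"
    by (rule DERIV_sum, rule DERIV_cmult, rule M_deriv)
  have s1: "(\<Sum>k\<le>degree A. a k x * (y ^ k * ?E y)) = uf n x y * y ^ m * ?E y"
  proof -
    have "(\<Sum>k\<le>degree A. a k x * (y ^ k * ?E y)) = (\<Sum>k\<le>degree A. a k x * y ^ k) * ?E y"
      by (simp add: sum_distrib_right mult.assoc)
    then show ?thesis using sumA[of n m x y] by (simp add: A_def a_def)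
  qed
  have s2: "(\<Sum>k\<le>degree B. c k * ((real k + 1) * y ^ k * ?R y)) = vf n y * y ^ m * ?R y"
  proof -
    have "(\<Sum>k\<le>degree B. c k * ((real k + 1) * y ^ k * ?R y)) = (\<Sum>k\<le>degree B. of_rat (coeff B k) * y ^ k) * ?R y"
      unfolding sum_distrib_right by (intro sum.cong refl) (simp add: c_def field_simps)
    then show ?thesis using sumB[of n m y] by (simp add: B_def)
  qed
  show "((\<lambda>y'. eval2 (pnm n m) x y' * ?E y' + eval2 (qnm n m) x y' * ?R y') has_real_derivative
      y ^ m * (uf n x y * ?E y + vf n y * ?R y)) (at y)"
    unfolding Fe by (rule DERIV_cong[OF DERIV_add[OF d1 d2]]) (simp only: s1 s2, simp add: algebra_simps)
next
  fix x y :: real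
  show "((\<lambda>x'. y ^ m * (uf n x' y * exp (- ((x' - y)\<^sup>2)) + vf n y * Erf (x' - y))) has_real_derivative
     x ^ n * y ^ m * exp (- ((x - y)\<^sup>2))) (at x)"
    by (rule G_deriv)
qed


definition tdle :: "bipoly \<Rightarrow> nat \<Rightarrow> bool" where
  "tdle P d \<longleftrightarrow> (\<forall>i j. coeff (coeff P j) i \<noteq> 0 \<longrightarrow> i + j \<le> d)"

lemma tdleD: "tdle P d \<Longrightarrow> d < i + j \<Longrightarrow> coeff (coeff P j) i = 0"
  unfolding tdle_def by force

lemma tdle_0: "tdle 0 d" by (simp add: tdle_def)

lemma tdle_mono: "tdle P d \<Longrightarrow> d \<le> e \<Longrightarrow> tdle P e"
  unfolding tdle_def by force

lemma tdle_add: "tdle P d \<Longrightarrow> tdle Q d \<Longrightarrow> tdle (P + Q) d"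
  unfolding tdle_def by force

lemma tdle_uminus: "tdle P d \<Longrightarrow> tdle (- P) d"
  unfolding tdle_def by force

lemma tdle_diff: "tdle P d \<Longrightarrow> tdle Q d \<Longrightarrow> tdle (P - Q) d"
  unfolding tdle_def by force

lemma tdle_sum: "(\<And>k. k \<in> S \<Longrightarrow> tdle (f k) d) \<Longrightarrow> tdle (sum f S) d"
proof (induction S rule: infinite_finite_induct)
  case (insert x F)
  then show ?case by (simp add: tdle_add)
qed (auto simp: tdle_0)

lemma tdle_mult:
  assumes P: "tdle P a" and Q: "tdle Q b"
  shows "tdle (P * Q) (a + b)"
  unfolding tdle_def
proof (intro allI impI)
  fix i j
  assume nz: "coeff (coeff (P * Q) j) i \<noteq> 0"
  have "coeff (coeff (P * Q) j) i = (\<Sum>l\<le>j. \<Sum>r\<le>i. coeff (coeff P l) r * coeff (coeff Q (j - l)) (i - r))"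
    by (simp add: coeff_mult coeff_sum)
  with nz obtain l where l: "l \<le> j" and "(\<Sum>r\<le>i. coeff (coeff P l) r * coeff (coeff Q (j - l)) (i - r)) \<noteq> 0"
    by (metis (no_types, lifting) atMost_iff sum.neutral)
  then obtain r where r: "r \<le> i" and "coeff (coeff P l) r * coeff (coeff Q (j - l)) (i - r) \<noteq> 0"
    by (metis (no_types, lifting) atMost_iff sum.neutral)
  then have "coeff (coeff P l) r \<noteq> 0" "coeff (coeff Q (j - l)) (i - r) \<noteq> 0" by auto
  then have "r + l \<le> a" "(i - r) + (j - l) \<le> b" using P Q unfolding tdle_def by auto
  then show "i + j \<le> a + b" using l r by linarith
qed

lemma tdle_const: "tdle [:c:] (degree c)"
  unfolding tdle_def
proof (intro allI impI)
  fix i j assume "coeff (coeff [:c:] j) i \<noteq> 0"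
  then have "j = 0" "coeff c i \<noteq> 0" by (cases j; simp)+
  then show "i + j \<le> degree c" using le_degree by auto
qed

lemma tdle_smult: "tdle P d \<Longrightarrow> tdle (smult c P) (degree c + d)"
proof -
  assume "tdle P d"
  have "smult c P = [:c:] * P" by simp
  then show ?thesis using tdle_mult[OF tdle_const \<open>tdle P d\<close>] by simp
qed

lemma tdle_smult_const: "tdle P d \<Longrightarrow> tdle (smult [:c:] P) d"
  using tdle_smult[of P d "[:c:]"] by simp

lemma tdle_X: "tdle (X_pow k) k"
  using tdle_const[of "monom 1 k"] by (simp add: X_pow_def degree_monom_eq)

lemma tdle_Y: "tdle (Y_pow k) k"
  unfolding tdle_def Y_pow_def by (auto simp: coeff_monom split: if_splits)

lemma tdle_at_x: "tdle (at_x q) (degree q)"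
  unfolding at_x_def by (rule tdle_const)

lemma tdle_swap2: "tdle P d \<Longrightarrow> tdle (swap2 P) d"
  unfolding tdle_def coeff_swap2 by force

lemma tdle_u: "tdle (u k) (k - 1)"
proof (induction k rule: u.induct)
  case 1
  then show ?case by (simp add: tdle_0)
next
  case 2
  then show ?case by (simp add: tdle_uminus tdle_smult_const tdle_X)
next
  case (3 k)
  have a: "tdle (Y_pow 1 * u (Suc k)) (Suc k)" using tdle_mult[OF tdle_Y[of 1] 3(1)] by simp
  have b: "tdle (smult [:of_nat (Suc k) / 2:] (u k)) (Suc k)"
    by (rule tdle_mono[OF tdle_smult_const[OF 3(2)]]) simp
  have c: "tdle (smult [:1/2:] (X_pow (Suc k))) (Suc k)"
    by (rule tdle_smult_const[OF tdle_X])
  show ?case using tdle_diff[OF tdle_add[OF a b] c] by simp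
qed

lemma v_lead: "degree (v k) \<le> k \<and> coeff (v k) k = 1"
proof (induction k rule: v.induct)
  case 1
  then show ?case by simp
next
  case 2
  then show ?case by simp
next
  case (3 k)
  have e: "v (Suc (Suc k)) = pCons 0 (v (Suc k)) + smult (of_nat (Suc k) / 2) (v k)" by simp
  have d1: "degree (pCons 0 (v (Suc k))) \<le> Suc (Suc k)"
    using 3(1) degree_pCons_le[of 0 "v (Suc k)"] by linarith
  have d2: "degree (smult (of_nat (Suc k) / 2) (v k)) \<le> Suc (Suc k)"
    using 3(2) degree_smult_le[of "of_nat (Suc k) / 2" "v k"] by linarith
  have c2: "coeff (v k) (Suc (Suc k)) = 0"
    using 3(2) by (intro coeff_eq_0) linarith
  show ?case unfolding e using d1 d2 c2 3(1) by (auto intro: degree_add_le)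
qed

lemma v_degree: "degree (v k) = k"
  using v_lead[of k] le_degree[of "v k" k] by auto

lemma tdle_coeff_const: "tdle P d \<Longrightarrow> tdle [:coeff P k:] (d - k)"
proof -
  assume P: "tdle P d"
  show ?thesis
  proof (cases "coeff P k = 0")
    case True then show ?thesis by (simp add: tdle_0)
  next
    case False
    then have "coeff (coeff P k) (degree (coeff P k)) \<noteq> 0" by simp
    then have "degree (coeff P k) + k \<le> d" using P unfolding tdle_def by blast
    then show ?thesis using tdle_mono[OF tdle_const[of "coeff P k"]] by simp
  qed
qed

lemma coeff_big_0: assumes "tdle P d" "d < k" shows "coeff P k = 0"
proof (intro poly_eqI)
  fix i
  show "coeff (coeff P k) i = coeff 0 i" using tdleD[OF assms(1), of i k] assms(2) by simp
qed

lemma u_top: "coeff (coeff (u (Suc k)) k) 0 = -1/2"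
proof (induction k)
  case 0
  then show ?case by (simp add: X_pow_def)
next
  case (Suc k)
  have z: "coeff (u k) (Suc k) = 0" using coeff_big_0[OF tdle_u[of k]] by simp
  have y: "coeff (Y_pow 1 * u (Suc k)) (Suc k) = coeff (u (Suc k)) k"
    by (simp add: Y_pow_def coeff_monom_mult)
  have x: "coeff (coeff (X_pow (Suc k)) (Suc k)) 0 = 0" by (simp add: X_pow_def)
  show ?case using Suc y z x by simp
qed

lemma total_degree_eq:
  assumes "tdle P d" "coeff (coeff P j) i \<noteq> 0" "i + j = d"
  shows "P \<noteq> 0 \<and> total_degree P = d"
proof
  show "P \<noteq> 0" using assms(2) by auto
  let ?S = "{i + j | i j. coeff (coeff P j) i \<noteq> 0}"
  have sub: "?S \<subseteq> {..d}" using assms(1) unfolding tdle_def by auto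
  have fin: "finite ?S" using finite_subset[OF sub] by simp
  have mem: "d \<in> ?S" using assms(2,3) by blast
  show "total_degree P = d" unfolding total_degree_def
    by (rule Max_eqI[OF fin]) (use sub mem in auto)
qed


lemma coeff_smult_const: "coeff (coeff (smult [:c:] P) j) i = c * coeff (coeff P j) i"
  by simp

lemma B_lead: "degree (v n * [:0,1:]^m) = n + m \<and> coeff (v n * [:0,1:]^m) (n + m) = 1"
proof -
  have e: "v n * [:0,1:]^m = monom 1 m * v n" by (simp add: monom_altdef mult.commute)
  have c: "coeff (v n * [:0,1:]^m) (n + m) = 1"
    unfolding e coeff_monom_mult using v_lead[of n] by simp
  have "degree (v n * [:0,1:]^m) \<le> n + m"
    unfolding e using degree_mult_le[of "monom (1::rat) m" "v n"] degree_monom_le[of "1::rat" m] v_degree[of n]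
    by linarith
  with c le_degree[of "v n * [:0,1:]^m" "n+m"] show ?thesis by auto
qed

lemma pu_props: "tdle (pu n m) (n + m) \<and> (\<forall>i j. n + m \<le> i + j \<longrightarrow> coeff (coeff (pu n m) j) i = 0)"
proof (cases "n = 0")
  case True
  then have "pu n m = 0" by (simp add: pu_def Let_def)
  then show ?thesis by (simp add: tdle_0)
next
  case False
  define A where "A = u n * Y_pow m"
  have tA: "tdle A (n + m - 1)" unfolding A_def
    using tdle_mult[OF tdle_u[of n] tdle_Y[of m]] False by (simp add: add.commute)
  have t: "tdle (pu n m) (n + m - 1)"
    unfolding pu_def Let_def A_def[symmetric]
  proof (rule tdle_sum)
    fix k assume "k \<in> {..degree A}"
    show "tdle ([:coeff A k:] * swap2 (u k)) (n + m - 1)"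
    proof (cases "k \<le> n + m - 1")
      case True
      show ?thesis
        by (rule tdle_mono[OF tdle_mult[OF tdle_coeff_const[OF tA, of k] tdle_swap2[OF tdle_u[of k]]]])
           (use True in linarith)
    next
      case False
      then have "coeff A k = 0" using coeff_big_0[OF tA] by simp
      then show ?thesis by (simp add: tdle_0)
    qed
  qed
  show ?thesis
  proof
    show "tdle (pu n m) (n + m)" by (rule tdle_mono[OF t]) simp
    show "\<forall>i j. n + m \<le> i + j \<longrightarrow> coeff (coeff (pu n m) j) i = 0"
      using tdleD[OF t] False by auto
  qed
qed

lemma qu_props: "tdle (qu n m) (n + m) \<and> (\<forall>i j. n + m \<le> i + j \<longrightarrow> coeff (coeff (qu n m) j) i = 0)"
proof (cases "n = 0")
  case True
  then have "qu n m = 0" by (simp add: qu_def Let_def)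
  then show ?thesis by (simp add: tdle_0)
next
  case False
  define A where "A = u n * Y_pow m"
  have tA: "tdle A (n + m - 1)" unfolding A_def
    using tdle_mult[OF tdle_u[of n] tdle_Y[of m]] False by (simp add: add.commute)
  have t: "tdle (qu n m) (n + m - 1)"
    unfolding qu_def Let_def A_def[symmetric]
  proof (rule tdle_uminus, rule tdle_sum)
    fix k assume "k \<in> {..degree A}"
    show "tdle ([:coeff A k:] * at_x (v k)) (n + m - 1)"
    proof (cases "k \<le> n + m - 1")
      case True
      show ?thesis
        by (rule tdle_mono[OF tdle_mult[OF tdle_coeff_const[OF tA, of k] tdle_at_x[of "v k"]]])
           (use True in \<open>simp add: v_degree\<close>)
    next
      case False
      then have "coeff A k = 0" using coeff_big_0[OF tA] by simp
      then show ?thesis by (simp add: tdle_0)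
    qed
  qed
  show ?thesis
  proof
    show "tdle (qu n m) (n + m)" by (rule tdle_mono[OF t]) simp
    show "\<forall>i j. n + m \<le> i + j \<longrightarrow> coeff (coeff (qu n m) j) i = 0"
      using tdleD[OF t] False by auto
  qed
qed

lemma p_deg: "pnm n m \<noteq> 0 \<and> total_degree (pnm n m) = n + m"
proof -
  define N where "N = n + m"
  define B where "B = v n * [:0,1:]^m"
  define T where "T = (\<lambda>k. smult [: coeff B k / of_nat (k+1) :] (swap2 (u (k+1))))"
  have BN: "degree B = N" "coeff B N = 1" using B_lead[of n m] by (auto simp: B_def N_def)
  have tT: "tdle (T k) k" for k
    unfolding T_def using tdle_smult_const[OF tdle_swap2[OF tdle_u[of "k+1"]]] by simp
  have pv: "pv n m = (\<Sum>k<N. T k) + T N"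
    unfolding pv_def Let_def B_def[symmetric] T_def[symmetric] BN(1)
    by (simp add: lessThan_Suc_atMost[symmetric])
  have PU: "tdle (pu n m) N" "\<And>i j. N \<le> i + j \<Longrightarrow> coeff (coeff (pu n m) j) i = 0"
    using pu_props[of n m] by (auto simp: N_def)
  have t: "tdle (pnm n m) N"
    unfolding pnm_def pv
    by (intro tdle_add PU(1) tdle_sum tdle_mono[OF tT]) auto
  have c1: "coeff (coeff (\<Sum>k<N. T k) 0) N = 0"
    unfolding coeff_sum by (intro sum.neutral ballI tdleD[OF tT]) auto
  have c2: "coeff (coeff (T N) 0) N = - 1 / (2 * (of_nat N + 1))"
    unfolding T_def coeff_smult_const coeff_swap2 BN(2) using u_top[of N] by simp
  have "coeff (coeff (pnm n m) 0) N \<noteq> 0"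
    unfolding pnm_def pv using PU(2)[of N 0] c1 c2 by simp
  from total_degree_eq[OF t this] show ?thesis by (simp add: N_def)
qed

lemma q_deg: "qnm n m \<noteq> 0 \<and> total_degree (qnm n m) = n + m + 1"
proof -
  define N where "N = n + m"
  define B where "B = v n * [:0,1:]^m"
  define T where "T = (\<lambda>k. smult [: coeff B k / of_nat (k+1) :] (Y_pow (k+1) - at_x (v (k+1))))"
  have BN: "degree B = N" "coeff B N = 1" using B_lead[of n m] by (auto simp: B_def N_def)
  have tT: "tdle (T k) (k+1)" for k
    unfolding T_def using tdle_smult_const[OF tdle_diff[OF tdle_Y[of "k+1"] tdle_at_x[of "v (k+1)", unfolded v_degree]]]
    by simp
  have qv: "qv n m = (\<Sum>k<N. T k) + T N"
    unfolding qv_def Let_def B_def[symmetric] T_def[symmetric] BN(1)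
    by (simp add: lessThan_Suc_atMost[symmetric])
  have QU: "tdle (qu n m) N" "\<And>i j. N \<le> i + j \<Longrightarrow> coeff (coeff (qu n m) j) i = 0"
    using qu_props[of n m] by (auto simp: N_def)
  have t: "tdle (qnm n m) (N + 1)"
    unfolding qnm_def qv
    by (intro tdle_add tdle_mono[OF QU(1)] tdle_sum tdle_mono[OF tT]) auto
  have c1: "coeff (coeff (\<Sum>k<N. T k) (N + 1)) 0 = 0"
    unfolding coeff_sum by (intro sum.neutral ballI tdleD[OF tT]) auto
  have c2: "coeff (coeff (T N) (N + 1)) 0 = 1 / (of_nat N + 1)"
    unfolding T_def coeff_smult_const BN(2) by (simp add: Y_pow_def at_x_def)
  have "coeff (coeff (qnm n m) (N + 1)) 0 \<noteq> 0"
    unfolding qnm_def qv using QU(2)[of 0 "N + 1"] c1 c2 by simp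
  from total_degree_eq[OF t this] show ?thesis by (simp add: N_def)
qed

theorem corollary1:
  fixes n m :: nat
  defines "F \<equiv> (\<lambda>x y. eval2 (pnm n m) x y * exp (- ((x - y)\<^sup>2))
                      + eval2 (qnm n m) x y * Erf (x - y))"
  shows "pnm n m \<noteq> 0 \<and> total_degree (pnm n m) = n + m
       \<and> qnm n m \<noteq> 0 \<and> total_degree (qnm n m) = n + m + 1
       \<and> (\<exists>G. (\<forall>x y. ((\<lambda>y'. F x y') has_real_derivative G x y) (at y))
              \<and> (\<forall>x y. ((\<lambda>x'. G x' y) has_real_derivative
                         x ^ n * y ^ m * exp (- ((x - y)\<^sup>2))) (at x)))"
  using p_deg[of n m] q_deg[of n m] analytic[of n m] unfolding F_def by blast

end
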